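(* Let $H$ be a finite normal subgroup of a group $G$ such that the center of $H$ is trivial. If $G/H$ is a Jordan group, then $G$ is a Jordan group and $J_G\leqslant |\mathrm{Aut}(H)|\, J_{G/H}^{|\mathrm{Aut}(H)|}$.
   Context: A group $G$ is called Jordan if there exists a positive integer $d$ such that every finite subgroup $K$ of $G$ contains a normal abelian subgroup of index at most $d$ in $K$; the minimal such $d$ is the Jordan constant $J_G$. *)

theory Defs
  imports "HOL-Algebra.Algebra"
begin

definition group_center :: "('a, 'b) monoid_scheme \<Rightarrow> 'a set" where
  "group_center G = {z \<in> carrier G. \<forall>g \<in> carrier G. z \<otimes>\<^bsub>G\<^esub> g = g \<otimes>\<^bsub>G\<^esub> z}"

definition jordan_bound :: "('a, 'b) monoid_scheme \<Rightarrow> nat \<Rightarrow> bool" where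
  "jordan_bound G d \<longleftrightarrow>
     (\<forall>K. subgroup K G \<and> finite K \<longrightarrow>
        (\<exists>A. A \<subseteq> K \<and> A \<lhd> G\<lparr>carrier := K\<rparr> \<and>
             (\<forall>x \<in> A. \<forall>y \<in> A. x \<otimes>\<^bsub>G\<^esub> y = y \<otimes>\<^bsub>G\<^esub> x) \<and>
             card K \<le> d * card A))"

definition jordan_group :: "('a, 'b) monoid_scheme \<Rightarrow> bool" where
  "jordan_group G \<longleftrightarrow> (\<exists>d > 0. jordan_bound G d)"

definition jordan_constant :: "('a, 'b) monoid_scheme \<Rightarrow> nat" where
  "jordan_constant G = (LEAST d. d > 0 \<and> jordan_bound G d)"

end

theory Submission
  imports Defs
begin


lemma card_fiber_bound:
  assumes "finite XX" "\<And>y. y \<in> f ` XX \<Longrightarrow> card {x\<in>XX. f x = y} \<le> bnd"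
  shows "card XX \<le> card (f ` XX) * bnd"
proof -
  have "XX = (\<Union>y\<in>f ` XX. {x\<in>XX. f x = y})" by auto
  hence "card XX \<le> (\<Sum>y\<in>f ` XX. card {x\<in>XX. f x = y})"
    by (metis card_UN_le assms(1) finite_imageI)
  also have "\<dots> \<le> (\<Sum>y\<in>f ` XX. bnd)" by (rule sum_mono) (use assms(2) in auto)
  finally show ?thesis by (simp add: mult.commute)
qed

lemma (in group) prod_card:
  assumes "finite C" "subgroup C G" "subgroup N G" "subgroup M G" "N \<subseteq> C" "M \<subseteq> C"
  shows "card N * card M \<le> card C * card (N \<inter> M)"
proof -
  let ?f = "\<lambda>p. fst p \<otimes> snd p"
  have fN: "finite N" "finite M" using assms finite_subset by auto
  have "card (N \<times> M) \<le> card (?f ` (N \<times> M)) * card (N \<inter> M)"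
  proof (rule card_fiber_bound)
    show "finite (N \<times> M)" using fN by auto
    fix y assume "y \<in> ?f ` (N \<times> M)"
    then obtain n0 m0 where nm: "n0 \<in> N" "m0 \<in> M" "y = n0 \<otimes> m0" by auto
    have gN: "n0 \<in> carrier G" "m0 \<in> carrier G" using nm assms subgroup.mem_carrier by metis+
    have "{x \<in> N \<times> M. ?f x = y} \<subseteq> (\<lambda>t. (n0 \<otimes> t, inv t \<otimes> m0)) ` (N \<inter> M)"
    proof
      fix x assume x: "x \<in> {x \<in> N \<times> M. ?f x = y}"
      then obtain n m where x2: "x = (n, m)" "n \<in> N" "m \<in> M" "n \<otimes> m = n0 \<otimes> m0" using nm by auto
      have g2: "n \<in> carrier G" "m \<in> carrier G" using x2 assms subgroup.mem_carrier by metis+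
      let ?t = "inv n0 \<otimes> n"
      have t1: "?t \<in> N" using x2 nm assms(3) by (simp add: subgroup.m_closed subgroup.m_inv_closed)
      have "inv n0 \<otimes> (n \<otimes> m) = m0" using x2(4) gN g2 inv_solve_left' by simp
      hence "?t = m0 \<otimes> inv m" using gN g2 by (simp add: inv_solve_right m_assoc)
      hence t2: "?t \<in> M" using x2 nm assms(4) by (simp add: subgroup.m_closed subgroup.m_inv_closed)
      have "n = n0 \<otimes> ?t" using gN g2 by (simp add: m_assoc[symmetric])
      moreover have "m = inv ?t \<otimes> m0"
        using \<open>?t = m0 \<otimes> inv m\<close> gN g2 by (simp add: inv_mult_group m_assoc)
      ultimately show "x \<in> (\<lambda>t. (n0 \<otimes> t, inv t \<otimes> m0)) ` (N \<inter> M)"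
        using t1 t2 x2 by auto
    qed
    thus "card {x \<in> N \<times> M. ?f x = y} \<le> card (N \<inter> M)"
      by (meson card_image_le card_mono fN finite_Int finite_imageI le_trans)
  qed
  moreover have "?f ` (N \<times> M) \<subseteq> C"
    using assms by (auto intro!: subgroup.m_closed[OF assms(2)])
  hence "card (?f ` (N \<times> M)) \<le> card C" using assms(1) card_mono by blast
  ultimately have "card (N \<times> M) \<le> card C * card (N \<inter> M)"
    using mult_le_mono1 le_trans by blast
  thus ?thesis by (simp add: card_cartesian_product)
qed

lemma (in group) family_card:
  assumes "finite S" "finite C" "subgroup C G"
    "\<And>N. N \<in> S \<Longrightarrow> subgroup N G \<and> N \<subseteq> C \<and> card C \<le> J * card N"
  shows "card C \<le> J ^ card S * card (C \<inter> \<Inter>S) \<and> subgroup (C \<inter> \<Inter>S) G"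
  using assms(1,4)
proof (induction S rule: finite_induct)
  case empty
  then show ?case using assms(3) by simp
next
  case (insert N S)
  let ?M = "C \<inter> \<Inter>S"
  have IH: "card C \<le> J ^ card S * card ?M" "subgroup ?M G"
    using insert.IH insert.prems by blast+
  have N: "subgroup N G" "N \<subseteq> C" "card C \<le> J * card N" using insert.prems by blast+
  have eq: "C \<inter> \<Inter>(insert N S) = N \<inter> ?M" using N by blast
  have sg: "subgroup (N \<inter> ?M) G" using N IH subgroups_Inter_pair by blast
  have pc: "card N * card ?M \<le> card C * card (N \<inter> ?M)"
    by (rule prod_card[OF assms(2,3) N(1) IH(2) N(2)]) blast
  have "card C * card C \<le> (J * card N) * (J ^ card S * card ?M)"
    using IH(1) N(3) by (rule mult_le_mono[rotated])
  also have "\<dots> = J ^ Suc (card S) * (card N * card ?M)" by (simp add: algebra_simps)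
  also have "\<dots> \<le> J ^ Suc (card S) * (card C * card (N \<inter> ?M))" using pc by simp
  finally have "card C * card C \<le> card C * (J ^ Suc (card S) * card (N \<inter> ?M))"
    by (simp add: algebra_simps)
  moreover have "card C > 0"
    using assms(2,3) subgroup.one_closed card_gt_0_iff by blast
  ultimately have "card C \<le> J ^ Suc (card S) * card (N \<inter> ?M)"
    using mult_le_cancel1 by blast
  moreover have "card (insert N S) = Suc (card S)" using insert.hyps by simp
  ultimately show ?case using eq sg by simp
qed

context group begin
lemma lcanc: "g \<in> carrier G \<Longrightarrow> z \<in> carrier G \<Longrightarrow> inv g \<otimes> (g \<otimes> z) = z"
  by (simp add: m_assoc[symmetric])
lemma rcanc: "g \<in> carrier G \<Longrightarrow> z \<in> carrier G \<Longrightarrow> g \<otimes> (inv g \<otimes> z) = z"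
  by (simp add: m_assoc[symmetric])
lemma conj_mult: "g \<in> carrier G \<Longrightarrow> x \<in> carrier G \<Longrightarrow> y \<in> carrier G \<Longrightarrow> g \<otimes> (x \<otimes> y) \<otimes> inv g = (g \<otimes> x \<otimes> inv g) \<otimes> (g \<otimes> y \<otimes> inv g)"
  by (simp add: m_assoc lcanc)
lemma conj_back: "g \<in> carrier G \<Longrightarrow> y \<in> carrier G \<Longrightarrow> g \<otimes> (inv g \<otimes> y \<otimes> g) \<otimes> inv g = y"
  by (simp add: m_assoc rcanc)
lemma conj_back2: "g \<in> carrier G \<Longrightarrow> y \<in> carrier G \<Longrightarrow> inv g \<otimes> (g \<otimes> y \<otimes> inv g) \<otimes> g = y"
  by (simp add: m_assoc lcanc)
lemma conj_comm: assumes "g \<in> carrier G" "c \<in> carrier G" "h \<in> carrier G" "c \<otimes> (inv g \<otimes> h \<otimes> g) = (inv g \<otimes> h \<otimes> g) \<otimes> c"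
  shows "g \<otimes> c \<otimes> inv g \<otimes> h = h \<otimes> (g \<otimes> c \<otimes> inv g)"
proof -
  have "g \<otimes> (c \<otimes> (inv g \<otimes> h \<otimes> g)) \<otimes> inv g = g \<otimes> ((inv g \<otimes> h \<otimes> g) \<otimes> c) \<otimes> inv g"
    using assms(4) by simp
  moreover have "g \<otimes> (c \<otimes> (inv g \<otimes> h \<otimes> g)) \<otimes> inv g = (g \<otimes> c \<otimes> inv g) \<otimes> (g \<otimes> (inv g \<otimes> h \<otimes> g) \<otimes> inv g)"
    using assms(1-3) by (intro conj_mult) auto
  moreover have "g \<otimes> ((inv g \<otimes> h \<otimes> g) \<otimes> c) \<otimes> inv g = (g \<otimes> (inv g \<otimes> h \<otimes> g) \<otimes> inv g) \<otimes> (g \<otimes> c \<otimes> inv g)"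
    using assms(1-3) by (intro conj_mult) auto
  moreover have "g \<otimes> (inv g \<otimes> h \<otimes> g) \<otimes> inv g = h" using assms(1,3) by (rule conj_back)
  ultimately show ?thesis by simp
qed
lemma phi_alg: assumes "g \<in> carrier G" "k \<in> carrier G" "h \<in> carrier G" "g \<otimes> h \<otimes> inv g = k \<otimes> h \<otimes> inv k"
  shows "(inv g \<otimes> k) \<otimes> h = h \<otimes> (inv g \<otimes> k)"
proof -
  have 1: "h = inv g \<otimes> (k \<otimes> h \<otimes> inv k) \<otimes> g" using conj_back2[of g h] assms by simp
  have "h \<otimes> (inv g \<otimes> k) = (inv g \<otimes> (k \<otimes> h \<otimes> inv k) \<otimes> g) \<otimes> (inv g \<otimes> k)"
    using 1 by (rule arg_cong[where f="\<lambda>z. z \<otimes> (inv g \<otimes> k)"])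
  also have "\<dots> = inv g \<otimes> k \<otimes> h" using assms(1-3) by (simp add: m_assoc rcanc lcanc)
  finally show ?thesis by simp
qed
lemma comm_mult: "a \<in> carrier G \<Longrightarrow> b \<in> carrier G \<Longrightarrow> h \<in> carrier G \<Longrightarrow> a \<otimes> h = h \<otimes> a \<Longrightarrow> b \<otimes> h = h \<otimes> b \<Longrightarrow> (a \<otimes> b) \<otimes> h = h \<otimes> (a \<otimes> b)"
  by (metis m_assoc)
lemma comm_inv: "a \<in> carrier G \<Longrightarrow> h \<in> carrier G \<Longrightarrow> a \<otimes> h = h \<otimes> a \<Longrightarrow> inv a \<otimes> h = h \<otimes> inv a"
  by (simp add: inv_solve_left inv_solve_right m_assoc)
lemma conj_cancel: "g \<in> carrier G \<Longrightarrow> x \<in> carrier G \<Longrightarrow> y \<in> carrier G \<Longrightarrow> g \<otimes> x \<otimes> inv g = g \<otimes> y \<otimes> inv g \<Longrightarrow> x = y"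
  by simp
lemma conj_inv: "g \<in> carrier G \<Longrightarrow> y \<in> carrier G \<Longrightarrow> inv g \<otimes> inv y \<otimes> g = inv (inv g \<otimes> y \<otimes> g)"
  by (simp add: inv_mult_group m_assoc)
lemma conj_compose: "g \<in> carrier G \<Longrightarrow> c \<in> carrier G \<Longrightarrow> y \<in> carrier G \<Longrightarrow> inv (g \<otimes> c) \<otimes> y \<otimes> (g \<otimes> c) = inv c \<otimes> (inv g \<otimes> y \<otimes> g) \<otimes> c"
  using inv_mult_group m_assoc by auto
lemma conj_compose2: "g \<in> carrier G \<Longrightarrow> x \<in> carrier G \<Longrightarrow> h \<in> carrier G \<Longrightarrow> inv g \<otimes> (x \<otimes> h \<otimes> inv x) \<otimes> g = inv (inv x \<otimes> g) \<otimes> h \<otimes> (inv x \<otimes> g)"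
  by (simp add: inv_mult_group m_assoc)
end



definition centr :: "('a, 'b) monoid_scheme \<Rightarrow> 'a set \<Rightarrow> 'a set \<Rightarrow> 'a set" where
  "centr G H K = {k\<in>K. \<forall>h\<in>H. k \<otimes>\<^bsub>G\<^esub> h = h \<otimes>\<^bsub>G\<^esub> k}"

lemma centr_iff: "c \<in> centr G H K \<longleftrightarrow> c \<in> K \<and> (\<forall>h\<in>H. c \<otimes>\<^bsub>G\<^esub> h = h \<otimes>\<^bsub>G\<^esub> c)"
  by (simp add: centr_def)

context normal
begin

lemma cent_sub:
  assumes K: "subgroup K G"
  shows "subgroup (centr G H K) G"
proof (rule subgroupI)
  show "centr G H K \<subseteq> carrier G"
    using subgroup.subset[OF K] unfolding centr_def by blast
  have "\<forall>h\<in>H. \<one> \<otimes> h = h \<otimes> \<one>" using subset by auto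
  moreover have "\<one> \<in> K" by (rule subgroup.one_closed[OF K])
  ultimately have "\<one> \<in> centr G H K" unfolding centr_iff by simp
  thus "centr G H K \<noteq> {}" by blast
next
  fix a assume a: "a \<in> centr G H K"
  hence aK: "a \<in> K" unfolding centr_iff by simp
  have aG: "a \<in> carrier G" by (rule subgroup.mem_carrier[OF K aK])
  have "\<forall>h\<in>H. inv a \<otimes> h = h \<otimes> inv a"
  proof
    fix h assume h: "h \<in> H"
    have hG: "h \<in> carrier G" using h subset by blast
    have "a \<otimes> h = h \<otimes> a" using a h unfolding centr_iff by blast
    thus "inv a \<otimes> h = h \<otimes> inv a" by (rule comm_inv[OF aG hG])
  qed
  moreover have "inv a \<in> K" by (rule subgroup.m_inv_closed[OF K aK])
  ultimately show "inv a \<in> centr G H K" unfolding centr_iff by blast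
next
  fix a b assume a: "a \<in> centr G H K" and b: "b \<in> centr G H K"
  hence aK: "a \<in> K" "b \<in> K" unfolding centr_iff by simp_all
  have G: "a \<in> carrier G" "b \<in> carrier G"
    by (rule subgroup.mem_carrier[OF K aK(1)], rule subgroup.mem_carrier[OF K aK(2)])
  have "\<forall>h\<in>H. a \<otimes> b \<otimes> h = h \<otimes> (a \<otimes> b)"
  proof
    fix h assume h: "h \<in> H"
    have hG: "h \<in> carrier G" using h subset by blast
    have "a \<otimes> h = h \<otimes> a" "b \<otimes> h = h \<otimes> b" using a b h unfolding centr_iff by blast+
    thus "a \<otimes> b \<otimes> h = h \<otimes> (a \<otimes> b)" by (rule comm_mult[OF G hG])
  qed
  moreover have "a \<otimes> b \<in> K" by (rule subgroup.m_closed[OF K aK])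
  ultimately show "a \<otimes> b \<in> centr G H K" unfolding centr_iff by blast
qed

lemma cent_norm:
  assumes K: "subgroup K G" and g: "g \<in> K" and c: "c \<in> centr G H K"
  shows "g \<otimes> c \<otimes> inv g \<in> centr G H K"
proof -
  have cK: "c \<in> K" using c unfolding centr_iff by blast
  have G: "g \<in> carrier G" "c \<in> carrier G"
    by (rule subgroup.mem_carrier[OF K g], rule subgroup.mem_carrier[OF K cK])
  have "\<forall>h\<in>H. g \<otimes> c \<otimes> inv g \<otimes> h = h \<otimes> (g \<otimes> c \<otimes> inv g)"
  proof
    fix h assume h: "h \<in> H"
    hence hG: "h \<in> carrier G" using subset by blast
    have h1: "inv g \<otimes> h \<otimes> g \<in> H" using inv_op_closed1 G h by blast
    hence "c \<otimes> (inv g \<otimes> h \<otimes> g) = (inv g \<otimes> h \<otimes> g) \<otimes> c" using c unfolding centr_iff by blast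
    thus "g \<otimes> c \<otimes> inv g \<otimes> h = h \<otimes> (g \<otimes> c \<otimes> inv g)"
      by (rule conj_comm[OF G hG])
  qed
  moreover have "g \<otimes> c \<otimes> inv g \<in> K"
    by (intro subgroup.m_closed[OF K] subgroup.m_inv_closed[OF K] g cK)
  ultimately show ?thesis unfolding centr_iff by blast
qed

lemma phi_auto:
  assumes g: "g \<in> carrier G"
  shows "(\<lambda>x\<in>H. g \<otimes> x \<otimes> inv g) \<in> auto (G\<lparr>carrier := H\<rparr>)"
proof -
  let ?f = "\<lambda>x\<in>H. g \<otimes> x \<otimes> inv g"
  have into: "?f \<in> H \<rightarrow> H" using inv_op_closed2 g by auto
  have hom: "?f \<in> hom (G\<lparr>carrier := H\<rparr>) (G\<lparr>carrier := H\<rparr>)"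
  proof -
    have "\<forall>x\<in>H. \<forall>y\<in>H. ?f (x \<otimes> y) = ?f x \<otimes> ?f y"
    proof (intro ballI)
      fix x y assume xy: "x \<in> H" "y \<in> H"
      hence G: "x \<in> carrier G" "y \<in> carrier G" using subset by blast+
      have "x \<otimes> y \<in> H" using xy by (simp add: m_closed)
      thus "?f (x \<otimes> y) = ?f x \<otimes> ?f y" using xy conj_mult[OF g G] by simp
    qed
    thus ?thesis unfolding hom_def using into by simp
  qed
  have inj: "inj_on ?f H"
  proof
    fix x y assume xy: "x \<in> H" "y \<in> H" "?f x = ?f y"
    hence G: "x \<in> carrier G" "y \<in> carrier G" using subset by blast+
    hence "g \<otimes> x \<otimes> inv g = g \<otimes> y \<otimes> inv g" using xy by simp
    thus "x = y" by (rule conj_cancel[OF g G])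
  qed
  have surj: "?f ` H = H"
  proof
    show "?f ` H \<subseteq> H" using inv_op_closed2 g by auto
    show "H \<subseteq> ?f ` H"
    proof
      fix y assume y: "y \<in> H"
      hence yG: "y \<in> carrier G" using subset by blast
      have z: "inv g \<otimes> y \<otimes> g \<in> H" using inv_op_closed1 g y by blast
      have "?f (inv g \<otimes> y \<otimes> g) = y" using z conj_back[OF g yG] by simp
      thus "y \<in> ?f ` H" using z by (metis image_eqI)
    qed
  qed
  have "?f \<in> Bij H" unfolding Bij_def using inj surj by (simp add: bij_betw_def)
  thus ?thesis unfolding auto_def using hom by simp
qed

lemma finite_auto:
  assumes "finite H" shows "finite (auto (G\<lparr>carrier := H\<rparr>))"
proof -
  have "auto (G\<lparr>carrier := H\<rparr>) \<subseteq> H \<rightarrow>\<^sub>E H"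
    unfolding auto_def Bij_def by (auto simp: bij_betw_def extensional_def)
  moreover have "finite (H \<rightarrow>\<^sub>E H)" using assms by (simp add: finite_PiE)
  ultimately show ?thesis using finite_subset by blast
qed

lemma phi_eq:
  assumes g: "g \<in> carrier G" and k: "k \<in> carrier G"
    and eq: "(\<lambda>x\<in>H. g \<otimes> x \<otimes> inv g) = (\<lambda>x\<in>H. k \<otimes> x \<otimes> inv k)"
  shows "\<forall>h\<in>H. (inv g \<otimes> k) \<otimes> h = h \<otimes> (inv g \<otimes> k)"
proof
  fix h assume h: "h \<in> H"
  hence hG: "h \<in> carrier G" using subset by blast
  have "g \<otimes> h \<otimes> inv g = k \<otimes> h \<otimes> inv k" using fun_cong[OF eq, of h] h by simp
  thus "(inv g \<otimes> k) \<otimes> h = h \<otimes> (inv g \<otimes> k)" by (rule phi_alg[OF g k hG])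
qed

end



context normal
begin

lemma main_bound:
  assumes fH: "finite H" and ctr: "group_center (G\<lparr>carrier := H\<rparr>) = {\<one>}"
    and JB: "jordan_bound (G Mod H) J" and J0: "J > 0"
    and K: "subgroup K G" and fK: "finite K"
  shows "\<exists>A. A \<subseteq> K \<and> A \<lhd> G\<lparr>carrier := K\<rparr> \<and> (\<forall>x\<in>A. \<forall>y\<in>A. x \<otimes> y = y \<otimes> x) \<and>
           card K \<le> (card (auto (G\<lparr>carrier := H\<rparr>)) * J ^ card (auto (G\<lparr>carrier := H\<rparr>))) * card A"
proof -
  define C where "C = centr G H K"
  define \<phi> where "\<phi> = (\<lambda>g. \<lambda>x\<in>H. g \<otimes> x \<otimes> inv g)"
  define \<pi> where "\<pi> = (\<lambda>c. H #> c)"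
  define a where "a = card (auto (G\<lparr>carrier := H\<rparr>))"
  have sC: "subgroup C G" unfolding C_def by (rule cent_sub[OF K])
  have CK: "C \<subseteq> K" unfolding C_def centr_def by blast
  have fC: "finite C" using CK fK finite_subset by blast
  have cnorm: "g \<otimes> c \<otimes> inv g \<in> C" if "g \<in> K" "c \<in> C" for g c
    using cent_norm[OF K that[unfolded C_def]] unfolding C_def .
  have KG: "g \<in> carrier G" if "g \<in> K" for g by (rule subgroup.mem_carrier[OF K that])
  have CG: "g \<in> carrier G" if "g \<in> C" for g by (rule subgroup.mem_carrier[OF sC that])
  have Cmem: "c \<in> C \<longleftrightarrow> c \<in> K \<and> (\<forall>h\<in>H. c \<otimes> h = h \<otimes> c)" for c
    unfolding C_def centr_iff by simp
  have HG: "h \<in> carrier G" if "h \<in> H" for h using that subset by blast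

  have phiC: "inv g \<otimes> k \<in> C" if "g \<in> K" "k \<in> K" "\<phi> g = \<phi> k" for g k
  proof -
    have "\<forall>h\<in>H. (inv g \<otimes> k) \<otimes> h = h \<otimes> (inv g \<otimes> k)"
      by (rule phi_eq[OF KG[OF that(1)] KG[OF that(2)]]) (use that(3) in \<open>simp add: \<phi>_def\<close>)
    moreover have "inv g \<otimes> k \<in> K"
      by (intro subgroup.m_closed[OF K] subgroup.m_inv_closed[OF K] that(1,2))
    ultimately show ?thesis unfolding Cmem by blast
  qed
  have cardK: "card K \<le> card (\<phi> ` K) * card C"
  proof (rule card_fiber_bound[OF fK])
    fix y assume "y \<in> \<phi> ` K"
    then obtain g0 where g0: "g0 \<in> K" "y = \<phi> g0" by blast
    have "{x \<in> K. \<phi> x = y} \<subseteq> (\<lambda>c. g0 \<otimes> c) ` C"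
    proof
      fix k assume "k \<in> {x \<in> K. \<phi> x = y}"
      hence k: "k \<in> K" "\<phi> g0 = \<phi> k" using g0 by auto
      have "inv g0 \<otimes> k \<in> C" by (rule phiC[OF g0(1) k])
      moreover have "k = g0 \<otimes> (inv g0 \<otimes> k)" using rcanc[OF KG[OF g0(1)] KG[OF k(1)]] by simp
      ultimately show "k \<in> (\<lambda>c. g0 \<otimes> c) ` C" by blast
    qed
    thus "card {x \<in> K. \<phi> x = y} \<le> card C"
      by (meson card_image_le card_mono fC finite_imageI le_trans)
  qed
  have phiK: "\<phi> ` K \<subseteq> auto (G\<lparr>carrier := H\<rparr>)"
    using phi_auto KG unfolding \<phi>_def by blast
  have fA: "finite (auto (G\<lparr>carrier := H\<rparr>))" by (rule finite_auto[OF fH])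
  have card_phi: "card (\<phi> ` K) \<le> a" unfolding a_def using card_mono[OF fA phiK] .

  interpret M: group "G Mod H" by (rule factorgroup_is_group)
  have pihom: "group_hom G (G Mod H) \<pi>"
    unfolding group_hom_def group_hom_axioms_def \<pi>_def
    using is_group M.is_group r_coset_hom_Mod by blast
  have pimult: "\<pi> (x \<otimes> y) = \<pi> x \<otimes>\<^bsub>G Mod H\<^esub> \<pi> y" if "x \<in> carrier G" "y \<in> carrier G" for x y
    using group_hom.hom_mult[OF pihom that] .
  have piinv: "\<pi> (inv x) = inv\<^bsub>G Mod H\<^esub> (\<pi> x)" if "x \<in> carrier G" for x
    using group_hom.hom_inv[OF pihom that] .
  have pione: "\<pi> \<one> = \<one>\<^bsub>G Mod H\<^esub>" using group_hom.hom_one[OF pihom] .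
  have piinj: "inj_on \<pi> C"
  proof
    fix c1 c2 assume c: "c1 \<in> C" "c2 \<in> C" "\<pi> c1 = \<pi> c2"
    have "c1 \<in> H #> c2"
      by (rule repr_independenceD[OF subgroup_axioms CG[OF c(1)]]) (use c(3) in \<open>simp add: \<pi>_def\<close>)
    then obtain h where h: "h \<in> H" "c1 = h \<otimes> c2" unfolding r_coset_def by blast
    have hG: "h \<in> carrier G" using HG[OF h(1)] .
    have "h = c1 \<otimes> inv c2" using h CG[OF c(2)] hG by (simp add: inv_solve_right)
    hence "h \<in> C" using c by (simp add: subgroup.m_closed[OF sC] subgroup.m_inv_closed[OF sC])
    hence "\<forall>x\<in>H. h \<otimes> x = x \<otimes> h" unfolding Cmem by blast
    hence "h \<in> group_center (G\<lparr>carrier := H\<rparr>)" unfolding group_center_def using h(1) by simp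
    hence "h = \<one>" using ctr by simp
    thus "c1 = c2" using h CG[OF c(2)] by simp
  qed
  define C' where "C' = \<pi> ` C"
  have sC': "subgroup C' (G Mod H)" unfolding C'_def
    by (rule group_hom.subgroup_img_is_subgroup[OF pihom sC])
  have fC': "finite C'" unfolding C'_def using fC by simp
  have cardC: "card C = card C'" unfolding C'_def using card_image[OF piinj] by simp
  obtain A' where A': "A' \<subseteq> C'" "A' \<lhd> (G Mod H)\<lparr>carrier := C'\<rparr>"
      "\<forall>x\<in>A'. \<forall>y\<in>A'. x \<otimes>\<^bsub>G Mod H\<^esub> y = y \<otimes>\<^bsub>G Mod H\<^esub> x" "card C' \<le> J * card A'"
    using JB sC' fC' unfolding jordan_bound_def by blast
  have sA'sub: "subgroup A' ((G Mod H)\<lparr>carrier := C'\<rparr>)" using A'(2) normal_imp_subgroup by blast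
  have sA': "subgroup A' (G Mod H)" by (rule M.incl_subgroup[OF sC' sA'sub])
  have gC': "group ((G Mod H)\<lparr>carrier := C'\<rparr>)" by (rule M.subgroup_imp_group[OF sC'])
  have normA': "x \<otimes>\<^bsub>G Mod H\<^esub> h \<otimes>\<^bsub>G Mod H\<^esub> inv\<^bsub>G Mod H\<^esub> x \<in> A'" if "x \<in> C'" "h \<in> A'" for x h
  proof -
    have "x \<otimes>\<^bsub>(G Mod H)\<lparr>carrier := C'\<rparr>\<^esub> h \<otimes>\<^bsub>(G Mod H)\<lparr>carrier := C'\<rparr>\<^esub> inv\<^bsub>(G Mod H)\<lparr>carrier := C'\<rparr>\<^esub> x \<in> A'"
      using A'(2) group.normal_inv_iff[OF gC'] that by simp
    thus ?thesis using M.m_inv_consistent[OF sC' that(1)] by simp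
  qed
  define B where "B = {c\<in>C. \<pi> c \<in> A'}"
  have Bmem: "b \<in> B \<longleftrightarrow> b \<in> C \<and> \<pi> b \<in> A'" for b unfolding B_def by simp
  have BC: "B \<subseteq> C" unfolding B_def by blast
  have piB: "\<pi> ` B = A'"
  proof
    show "\<pi> ` B \<subseteq> A'" unfolding B_def by blast
    show "A' \<subseteq> \<pi> ` B"
    proof
      fix x assume x: "x \<in> A'"
      then obtain c where "c \<in> C" "x = \<pi> c" using A'(1) unfolding C'_def by blast
      thus "x \<in> \<pi> ` B" using x unfolding B_def by blast
    qed
  qed
  have cardB: "card B = card A'"
    using card_image[OF inj_on_subset[OF piinj BC]] piB by simp
  have cardCB: "card C \<le> J * card B" using cardC cardB A'(4) by simp
  have sB: "subgroup B G"
  proof (rule subgroupI)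
    show "B \<subseteq> carrier G" using BC CG by blast
    have "\<one> \<in> C" by (rule subgroup.one_closed[OF sC])
    moreover have "\<pi> \<one> \<in> A'" using pione subgroup.one_closed[OF sA'] by simp
    ultimately have "\<one> \<in> B" unfolding Bmem by blast
    thus "B \<noteq> {}" by blast
  next
    fix b assume b: "b \<in> B"
    hence bC: "b \<in> C" and pb: "\<pi> b \<in> A'" unfolding Bmem by auto
    have "inv b \<in> C" by (rule subgroup.m_inv_closed[OF sC bC])
    moreover have "\<pi> (inv b) \<in> A'" using piinv[OF CG[OF bC]] subgroup.m_inv_closed[OF sA' pb] by simp
    ultimately show "inv b \<in> B" unfolding Bmem by blast
  next
    fix b c assume b: "b \<in> B" and c: "c \<in> B"
    hence bC: "b \<in> C" "c \<in> C" and pb: "\<pi> b \<in> A'" "\<pi> c \<in> A'" unfolding Bmem by auto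
    have "b \<otimes> c \<in> C" by (rule subgroup.m_closed[OF sC bC])
    moreover have "\<pi> (b \<otimes> c) \<in> A'" using pimult[OF CG[OF bC(1)] CG[OF bC(2)]] subgroup.m_closed[OF sA' pb] by simp
    ultimately show "b \<otimes> c \<in> B" unfolding Bmem by blast
  qed
  have Bab: "x \<otimes> y = y \<otimes> x" if "x \<in> B" "y \<in> B" for x y
  proof -
    have xC: "x \<in> C" "y \<in> C" and px: "\<pi> x \<in> A'" "\<pi> y \<in> A'" using that unfolding Bmem by auto
    have "\<pi> (x \<otimes> y) = \<pi> (y \<otimes> x)"
      using pimult[OF CG[OF xC(1)] CG[OF xC(2)]] pimult[OF CG[OF xC(2)] CG[OF xC(1)]] A'(3) px by simp
    moreover have "x \<otimes> y \<in> C" "y \<otimes> x \<in> C" using subgroup.m_closed[OF sC] xC by auto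
    ultimately show ?thesis using piinj unfolding inj_on_def by blast
  qed
  have Bnorm: "c \<otimes> b \<otimes> inv c \<in> B" if "c \<in> C" "b \<in> B" for c b
  proof -
    have bC: "b \<in> C" and pb: "\<pi> b \<in> A'" using that unfolding Bmem by auto
    have cG: "c \<in> carrier G" "b \<in> carrier G" using CG that(1) bC by auto
    have "c \<otimes> b \<otimes> inv c \<in> C"
      by (intro subgroup.m_closed[OF sC] subgroup.m_inv_closed[OF sC] that(1) bC)
    moreover have "\<pi> (c \<otimes> b \<otimes> inv c) = \<pi> c \<otimes>\<^bsub>G Mod H\<^esub> \<pi> b \<otimes>\<^bsub>G Mod H\<^esub> inv\<^bsub>G Mod H\<^esub> (\<pi> c)"
      using cG by (simp add: pimult piinv)
    moreover have "\<pi> c \<in> C'" unfolding C'_def using that(1) by blast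
    ultimately show ?thesis using normA' pb unfolding Bmem by simp
  qed
  define D where "D = (\<lambda>g. {y\<in>C. inv g \<otimes> y \<otimes> g \<in> B})"
  have Dmem: "y \<in> D g \<longleftrightarrow> y \<in> C \<and> inv g \<otimes> y \<otimes> g \<in> B" for y g unfolding D_def by simp
  have DC: "D g \<subseteq> C" for g unfolding D_def by blast
  have sD: "subgroup (D g) G" if g: "g \<in> K" for g
  proof (rule subgroupI)
    have gG: "g \<in> carrier G" by (rule KG[OF g])
    show "D g \<subseteq> carrier G" using DC CG by blast
    have "\<one> \<in> C" by (rule subgroup.one_closed[OF sC])
    moreover have "inv g \<otimes> \<one> \<otimes> g \<in> B" using gG subgroup.one_closed[OF sB] by simp
    ultimately have "\<one> \<in> D g" unfolding Dmem by blast
    thus "D g \<noteq> {}" by blast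
  next
    fix y assume y: "y \<in> D g"
    have gG: "g \<in> carrier G" by (rule KG[OF g])
    have yC: "y \<in> C" and yB: "inv g \<otimes> y \<otimes> g \<in> B" using y unfolding Dmem by auto
    have "inv y \<in> C" by (rule subgroup.m_inv_closed[OF sC yC])
    moreover have "inv g \<otimes> inv y \<otimes> g \<in> B"
      using conj_inv[OF gG CG[OF yC]] subgroup.m_inv_closed[OF sB yB] by simp
    ultimately show "inv y \<in> D g" unfolding Dmem by blast
  next
    fix y z assume y: "y \<in> D g" and z: "z \<in> D g"
    have gG: "g \<in> carrier G" by (rule KG[OF g])
    have yC: "y \<in> C" "z \<in> C" and yB: "inv g \<otimes> y \<otimes> g \<in> B" "inv g \<otimes> z \<otimes> g \<in> B"
      using y z unfolding Dmem by auto
    have "y \<otimes> z \<in> C" by (rule subgroup.m_closed[OF sC yC])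
    moreover have "inv g \<otimes> (y \<otimes> z) \<otimes> g = (inv g \<otimes> y \<otimes> g) \<otimes> (inv g \<otimes> z \<otimes> g)"
      using conj_mult[OF inv_closed[OF gG] CG[OF yC(1)] CG[OF yC(2)]] gG by simp
    hence "inv g \<otimes> (y \<otimes> z) \<otimes> g \<in> B" using subgroup.m_closed[OF sB yB] by simp
    ultimately show "y \<otimes> z \<in> D g" unfolding Dmem by blast
  qed
  have cardD: "card (D g) = card B" if g: "g \<in> K" for g
  proof -
    have gG: "g \<in> carrier G" by (rule KG[OF g])
    have "bij_betw (\<lambda>y. inv g \<otimes> y \<otimes> g) (D g) B"
    proof (rule bij_betw_imageI)
      show "inj_on (\<lambda>y. inv g \<otimes> y \<otimes> g) (D g)"
      proof
        fix x y assume xy: "x \<in> D g" "y \<in> D g" "inv g \<otimes> x \<otimes> g = inv g \<otimes> y \<otimes> g"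
        have "x \<in> carrier G" "y \<in> carrier G" using xy(1,2) DC CG by blast+
        thus "x = y" using conj_cancel[OF inv_closed[OF gG]] xy(3) gG by simp
      qed
      show "(\<lambda>y. inv g \<otimes> y \<otimes> g) ` D g = B"
      proof
        show "(\<lambda>y. inv g \<otimes> y \<otimes> g) ` D g \<subseteq> B" unfolding D_def by blast
        show "B \<subseteq> (\<lambda>y. inv g \<otimes> y \<otimes> g) ` D g"
        proof
          fix b assume b: "b \<in> B"
          have bC: "b \<in> C" using b BC by blast
          have yC: "g \<otimes> b \<otimes> inv g \<in> C" by (rule cnorm[OF g bC])
          have eq: "inv g \<otimes> (g \<otimes> b \<otimes> inv g) \<otimes> g = b" by (rule conj_back2[OF gG CG[OF bC]])
          hence "g \<otimes> b \<otimes> inv g \<in> D g" using yC b unfolding Dmem by simp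
          thus "b \<in> (\<lambda>y. inv g \<otimes> y \<otimes> g) ` D g" using eq by (metis image_eqI)
        qed
      qed
    qed
    thus ?thesis by (rule bij_betw_same_card)
  qed
  have Dsub: "D g \<subseteq> D k" if g: "g \<in> K" and k: "k \<in> K" and eq: "\<phi> g = \<phi> k" for g k
  proof
    fix y assume y: "y \<in> D g"
    have gG: "g \<in> carrier G" and kG: "k \<in> carrier G" using KG g k by auto
    have c: "inv g \<otimes> k \<in> C" by (rule phiC[OF g k eq])
    define c' where "c' = inv g \<otimes> k"
    have cC: "c' \<in> C" using c unfolding c'_def .
    have cG: "c' \<in> carrier G" using CG[OF cC] .
    have kk: "k = g \<otimes> c'" unfolding c'_def using rcanc[OF gG kG] by simp
    have yC: "y \<in> C" and yB: "inv g \<otimes> y \<otimes> g \<in> B" using y unfolding Dmem by auto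
    have "inv k \<otimes> y \<otimes> k = inv c' \<otimes> (inv g \<otimes> y \<otimes> g) \<otimes> c'"
      unfolding kk by (rule conj_compose[OF gG cG CG[OF yC]])
    also have "\<dots> = inv c' \<otimes> (inv g \<otimes> y \<otimes> g) \<otimes> inv (inv c')" using cG by simp
    also have "\<dots> \<in> B" by (rule Bnorm[OF subgroup.m_inv_closed[OF sC cC] yB])
    finally show "y \<in> D k" using yC unfolding Dmem by blast
  qed
  define S where "S = D ` K"
  have fS: "finite S" unfolding S_def using fK by simp
  have cardS: "card S \<le> card (\<phi> ` K)"
  proof -
    define \<psi> where "\<psi> = (\<lambda>f. D (SOME g. g \<in> K \<and> \<phi> g = f))"
    have "S = \<psi> ` (\<phi> ` K)"
      unfolding S_def image_image
    proof (rule image_cong[OF refl])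
      fix g assume g: "g \<in> K"
      have ex: "\<exists>g'. g' \<in> K \<and> \<phi> g' = \<phi> g" using g by blast
      define g' where "g' = (SOME g'. g' \<in> K \<and> \<phi> g' = \<phi> g)"
      have g': "g' \<in> K" "\<phi> g' = \<phi> g" using someI_ex[OF ex] unfolding g'_def by blast+
      have "D g = D g'" using Dsub[OF g g'(1) g'(2)[symmetric]] Dsub[OF g'(1) g g'(2)] by blast
      thus "D g = \<psi> (\<phi> g)" unfolding \<psi>_def g'_def by simp
    qed
    thus ?thesis using card_image_le[OF finite_imageI[OF fK]] by simp
  qed
  have Sprop: "subgroup N G \<and> N \<subseteq> C \<and> card C \<le> J * card N" if NS: "N \<in> S" for N
  proof -
    obtain g where g: "g \<in> K" "N = D g" using NS unfolding S_def by blast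
    show ?thesis using sD[OF g(1)] DC cardD[OF g(1)] cardCB g(2) by simp
  qed
  define A where "A = C \<inter> \<Inter>S"
  have fam: "card C \<le> J ^ card S * card A \<and> subgroup A G"
    unfolding A_def by (rule family_card[OF fS fC sC Sprop])
  have AC: "A \<subseteq> C" unfolding A_def by blast
  have AK: "A \<subseteq> K" using AC CK by blast
  have AB: "A \<subseteq> B"
  proof
    fix y assume y: "y \<in> A"
    have "D \<one> \<in> S" unfolding S_def using subgroup.one_closed[OF K] by blast
    hence "y \<in> D \<one>" using y unfolding A_def by blast
    thus "y \<in> B" using CG unfolding Dmem by auto
  qed
  have Aab: "\<forall>x\<in>A. \<forall>y\<in>A. x \<otimes> y = y \<otimes> x" using AB Bab by blast
  have Anorm: "A \<lhd> G\<lparr>carrier := K\<rparr>"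
  proof -
    have gK: "group (G\<lparr>carrier := K\<rparr>)" by (rule subgroup_imp_group[OF K])
    have sAK: "subgroup A (G\<lparr>carrier := K\<rparr>)" using subgroup_incl[OF _ K AK] fam by blast
    have "x \<otimes> h \<otimes> inv x \<in> A" if x: "x \<in> K" and h: "h \<in> A" for x h
    proof -
      have xG: "x \<in> carrier G" by (rule KG[OF x])
      have hC: "h \<in> C" using h AC by blast
      have hG: "h \<in> carrier G" by (rule CG[OF hC])
      have "x \<otimes> h \<otimes> inv x \<in> C" by (rule cnorm[OF x hC])
      moreover have "x \<otimes> h \<otimes> inv x \<in> N" if N: "N \<in> S" for N
      proof -
        obtain g where g: "g \<in> K" "N = D g" using N unfolding S_def by blast
        have gG: "g \<in> carrier G" by (rule KG[OF g(1)])
        have xg: "inv x \<otimes> g \<in> K" by (intro subgroup.m_closed[OF K] subgroup.m_inv_closed[OF K] x g(1))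
        have "D (inv x \<otimes> g) \<in> S" unfolding S_def using xg by blast
        hence "h \<in> D (inv x \<otimes> g)" using h unfolding A_def by blast
        hence "inv (inv x \<otimes> g) \<otimes> h \<otimes> (inv x \<otimes> g) \<in> B" unfolding Dmem by blast
        hence "inv g \<otimes> (x \<otimes> h \<otimes> inv x) \<otimes> g \<in> B" using conj_compose2[OF gG xG hG] by simp
        thus ?thesis using \<open>x \<otimes> h \<otimes> inv x \<in> C\<close> g(2) using Dmem by simp
      qed
      ultimately show ?thesis unfolding A_def by blast
    qed
    thus ?thesis using group.normal_inv_iff[OF gK] sAK m_inv_consistent[OF K] by simp
  qed
  have J1: "J \<ge> 1" using J0 by simp
  have "card K \<le> card (\<phi> ` K) * card C" by (rule cardK)
  also have "\<dots> \<le> a * (J ^ card S * card A)" using card_phi fam by (intro mult_le_mono) auto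
  also have "\<dots> \<le> a * (J ^ a * card A)"
    using power_increasing[OF le_trans[OF cardS card_phi] J1] by (intro mult_le_mono) auto
  finally have "card K \<le> (a * J ^ a) * card A" by (simp add: mult.assoc)
  thus ?thesis using AK Anorm Aab unfolding a_def by blast
qed

end

theorem corollary1p21:
  fixes G :: "('a, 'b) monoid_scheme" and H :: "'a set"
  assumes "group G"
    and "H \<lhd> G"
    and "finite H"
    and "group_center (G\<lparr>carrier := H\<rparr>) = {\<one>\<^bsub>G\<^esub>}"
    and "jordan_group (G Mod H)"
  shows "jordan_group G \<and>
         jordan_constant G \<le>
           card (auto (G\<lparr>carrier := H\<rparr>)) *
           jordan_constant (G Mod H) ^ card (auto (G\<lparr>carrier := H\<rparr>))"
proof -
  interpret group G by (rule assms(1))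
  interpret N: normal H G by (rule assms(2))
  define J where "J = jordan_constant (G Mod H)"
  define a where "a = card (auto (G\<lparr>carrier := H\<rparr>))"
  have ex: "\<exists>d. d > 0 \<and> jordan_bound (G Mod H) d" using assms(5) unfolding jordan_group_def by blast
  have JJ: "J > 0 \<and> jordan_bound (G Mod H) J"
    unfolding J_def jordan_constant_def by (rule LeastI_ex[OF ex])
  have fA: "finite (auto (G\<lparr>carrier := H\<rparr>))" by (rule N.finite_auto[OF assms(3)])
  have "auto (G\<lparr>carrier := H\<rparr>) \<noteq> {}" using N.phi_auto[OF one_closed] by blast
  hence a0: "a > 0" unfolding a_def using fA card_gt_0_iff by blast
  have JB: "jordan_bound G (a * J ^ a)"
    unfolding jordan_bound_def a_def
    using N.main_bound[OF assms(3,4)] JJ by blast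
  have pos: "a * J ^ a > 0" using a0 JJ by simp
  have "jordan_group G" unfolding jordan_group_def using JB pos by blast
  moreover have "jordan_constant G \<le> a * J ^ a"
    unfolding jordan_constant_def by (rule Least_le) (use pos JB in blast)
  ultimately show ?thesis unfolding a_def J_def by blast
qed

end
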